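(* Let $V:[0,+\infty)\to[0,+\infty)$ be a $C^1$ strictly increasing function with $\lim_{t\to\infty}V(t)=+\infty$, and let $S:=V'$. Let $(a_n)_{n\in\mathbb N}$ be a strictly decreasing sequence converging to $0$, and let $f:(0,+\infty)\to\mathbb R$ be a positive increasing $C^2$ function such that $\lim_{s\to\infty}f(s)=+\infty$, and such that for every $r>1$: $\lim_{s\to\infty}\frac{s f'(s)}{[f(s)]^r}=0$ and $s\mapsto\frac{f'(s)}{[f(s)]^r}$ is strictly decreasing. Define $\tilde\rho_n:(0,+\infty)\to\mathbb R$ by \[ \tilde\rho_n(t):=\frac{a_n\,f'(V(t))}{[f(V(t))]^{a_n+1}}. \] Then the functions $\tilde\rho_n$ belong to $C^1(0,+\infty)$, are strictly decreasing, and satisfy: (i) $\lim_{n\to\infty}\tilde\rho_n(r)=0$ for all $r>0$ and $\lim_{r\to+\infty}\tilde\rho_n(r)V(r)=0$ for all $n$; (ii) for all $n>m$, $r\mapsto\tilde\rho_n(r)/\tilde\rho_m(r)$ is non-decreasing on $(0,+\infty)$; (iii) $\lim_{R\to+\infty}\lim_{n\to\infty}\int_R^{+\infty}S(r)\tilde\rho_n(r)\,\mathrm dr=1$. Consequently, on any metric measure space $(X,\mathsf d,\mathfrak m)$ the mollifiers $\rho_n(x,y):=\tilde\rho_n(\mathsf d(x,y))$, $x\neq y$, satisfy approximation of the identity of radial type associated to $V$.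
   Context: Approximation of the identity of radial type associated to $V$ for functions $\rho_n$ on $\{(x,y)\in X\times X:x\neq y\}$ means: there are strictly decreasing $\tilde\rho_n\in C^1(0,+\infty)$ with $\rho_n(x,y)=\tilde\rho_n(\mathsf d(x,y))$ satisfying properties (i), (ii), (iii) listed in the claim. *)

theory Defs
  imports "HOL-Analysis.Analysis"
begin

definition C1_on :: "real set \<Rightarrow> (real \<Rightarrow> real) \<Rightarrow> bool" where
  "C1_on A g \<longleftrightarrow> (\<forall>x\<in>A. g differentiable (at x)) \<and> continuous_on A (deriv g)"

definition C2_on :: "real set \<Rightarrow> (real \<Rightarrow> real) \<Rightarrow> bool" where
  "C2_on A g \<longleftrightarrow> C1_on A g \<and> C1_on A (deriv g)"

definition approx_identity_radial ::
  "(real \<Rightarrow> real) \<Rightarrow> (real \<Rightarrow> real) \<Rightarrow> (nat \<Rightarrow> 'a::metric_space \<Rightarrow> 'a \<Rightarrow> real) \<Rightarrow> bool" where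
  "approx_identity_radial V S rho \<longleftrightarrow>
     (\<exists>rt :: nat \<Rightarrow> real \<Rightarrow> real.
        (\<forall>n. C1_on {0<..} (rt n)) \<and>
        (\<forall>n s t. 0 < s \<longrightarrow> s < t \<longrightarrow> rt n t < rt n s) \<and>
        (\<forall>n x y. x \<noteq> y \<longrightarrow> rho n x y = rt n (dist x y)) \<and>
        (\<forall>r>0. (\<lambda>n. rt n r) \<longlonglongrightarrow> 0) \<and>
        (\<forall>n. ((\<lambda>r. rt n r * V r) \<longlongrightarrow> 0) at_top) \<and>
        (\<forall>n m. m < n \<longrightarrow> mono_on {0<..} (\<lambda>r. rt n r / rt m r)) \<and>
        (\<forall>n. \<forall>R>0. set_integrable lborel {R..} (\<lambda>r. S r * rt n r)) \<and>
        (\<exists>L. (\<forall>R>0. (\<lambda>n. LBINT r:{R..}. S r * rt n r) \<longlonglongrightarrow> L R) \<and>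
             (L \<longlongrightarrow> 1) at_top))"

end

theory Submission
  imports Defs
begin

theorem mainTheorem3:
  fixes V S :: "real \<Rightarrow> real" and a :: "nat \<Rightarrow> real" and f :: "real \<Rightarrow> real"
    and \<rho> :: "nat \<Rightarrow> real \<Rightarrow> real"
  assumes V_nonneg: "\<forall>t\<ge>0. V t \<ge> 0"
    and V_deriv: "\<forall>t\<ge>0. (V has_real_derivative S t) (at t within {0..})"
    and S_cont: "continuous_on {0..} S"
    and V_strict: "\<forall>s t. 0 \<le> s \<longrightarrow> s < t \<longrightarrow> V s < V t"
    and V_lim: "filterlim V at_top at_top"
    and a_strict: "\<forall>n. a (Suc n) < a n"
    and a_lim: "a \<longlonglongrightarrow> 0"
    and f_pos: "\<forall>s>0. f s > 0"
    and f_mono: "mono_on {0<..} f"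
    and f_C2: "C2_on {0<..} f"
    and f_lim: "filterlim f at_top at_top"
    and f_lim2: "\<forall>r>1. ((\<lambda>s. s * deriv f s / (f s) powr r) \<longlongrightarrow> 0) at_top"
    and f_dec: "\<forall>r>1. \<forall>s t. 0 < s \<longrightarrow> s < t \<longrightarrow>
                   deriv f t / (f t) powr r < deriv f s / (f s) powr r"
    and \<rho>_def: "\<forall>n t. \<rho> n t = a n * deriv f (V t) / (f (V t)) powr (a n + 1)"
  shows "(\<forall>n. C1_on {0<..} (\<rho> n)) \<and>
         (\<forall>n s t. 0 < s \<longrightarrow> s < t \<longrightarrow> \<rho> n t < \<rho> n s) \<and>
         (\<forall>r>0. (\<lambda>n. \<rho> n r) \<longlonglongrightarrow> 0) \<and>
         (\<forall>n. ((\<lambda>r. \<rho> n r * V r) \<longlongrightarrow> 0) at_top) \<and>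
         (\<forall>n m. m < n \<longrightarrow> mono_on {0<..} (\<lambda>r. \<rho> n r / \<rho> m r)) \<and>
         (\<forall>n. \<forall>R>0. set_integrable lborel {R..} (\<lambda>r. S r * \<rho> n r)) \<and>
         (\<exists>L. (\<forall>R>0. (\<lambda>n. LBINT r:{R..}. S r * \<rho> n r) \<longlonglongrightarrow> L R) \<and>
              (L \<longlongrightarrow> 1) at_top) \<and>
         (\<forall>rho :: nat \<Rightarrow> 'a::metric_space \<Rightarrow> 'a \<Rightarrow> real.
            (\<forall>n x y. x \<noteq> y \<longrightarrow> rho n x y = \<rho> n (dist x y)) \<longrightarrow>
            approx_identity_radial V S rho)"
proof -
  have a_lt: "a n < a m" if "m < n" for m n
    using that
  proof (induction n)
    case 0 then show ?case by simp
  next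
    case (Suc n)
    then show ?case using a_strict by (metis less_Suc_eq order.strict_trans)
  qed
  have a_pos: "a n > 0" for n
  proof -
    have "decseq a" using a_strict by (intro decseq_SucI) (auto intro: less_imp_le)
    then have "0 \<le> a (Suc n)" using decseq_ge a_lim by blast
    moreover have "a (Suc n) < a n" using a_strict by simp
    ultimately show ?thesis by linarith
  qed
  have Vpos: "V t > 0" if "t > 0" for t
  proof -
    have "V 0 < V t" using V_strict that by simp
    moreover have "V 0 \<ge> 0" using V_nonneg by simp
    ultimately show ?thesis by linarith
  qed
  have fVpos: "f (V t) > 0" if "t > 0" for t
    using f_pos Vpos[OF that] by blast
  have V_at: "(V has_real_derivative S t) (at t)" if "t > 0" for t
  proof -
    have "(V has_real_derivative S t) (at t within {0..})"
      using V_deriv that by simp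
    then have "(V has_real_derivative S t) (at t within {0<..})"
      by (rule DERIV_subset) auto
    moreover have "at t within {0<..} = at t"
      using that by (intro at_within_open) auto
    ultimately show ?thesis by simp
  qed
  have V_cont: "isCont V t" if "t > 0" for t
    using V_at[OF that] DERIV_isCont by blast
  have S_isCont: "isCont S t" if "t > 0" for t
  proof -
    have "continuous_on {0<..} S" using S_cont by (rule continuous_on_subset) auto
    then show ?thesis using that by (simp add: continuous_on_eq_continuous_at)
  qed
  have S_nonneg: "S t \<ge> 0" if "t > 0" for t
  proof (rule mono_on_imp_deriv_nonneg[OF _ V_at[OF that]])
    show "mono_on {0..} V" using V_strict
      by (auto simp: mono_on_def) (metis less_eq_real_def)
    show "t \<in> interior {0..}" using that by simp
  qed
  have f_diff: "(f has_real_derivative deriv f s) (at s)" if "s > 0" for s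
    using f_C2 that unfolding C2_on_def C1_on_def
    by (simp add: DERIV_deriv_iff_real_differentiable)
  have f'_diff: "(deriv f has_real_derivative deriv (deriv f) s) (at s)" if "s > 0" for s
    using f_C2 that unfolding C2_on_def C1_on_def
    by (simp add: DERIV_deriv_iff_real_differentiable)
  have f''_cont: "continuous_on {0<..} (deriv (deriv f))"
    using f_C2 unfolding C2_on_def C1_on_def by simp
  have f'_nonneg: "deriv f s \<ge> 0" if "s > 0" for s
  proof -
    have "s \<in> interior {0<..}" using that by (simp add: interior_open)
    then show ?thesis using mono_on_imp_deriv_nonneg[OF f_mono f_diff[OF that]] by simp
  qed
  have f'_pos: "deriv f s > 0" if "s > 0" for s
  proof -
    have "deriv f (s+1) / (f (s+1)) powr 2 < deriv f s / (f s) powr 2"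
      using f_dec that by auto
    moreover have "deriv f (s+1) / (f (s+1)) powr 2 \<ge> 0"
      using f'_nonneg[of "s+1"] that by simp
    ultimately have "deriv f s / (f s) powr 2 > 0" by linarith
    moreover have "(f s) powr 2 > 0" using f_pos that by (metis powr_gt_zero less_irrefl)
    ultimately show ?thesis by (simp add: zero_less_divide_iff)
  qed

  have rho_eq: "\<rho> n t = a n * (deriv f (V t) / f (V t) powr (a n + 1))" for n t
    using \<rho>_def by simp
  have rho_fun: "\<rho> n = (\<lambda>t. a n * deriv f (V t) / f (V t) powr (a n + 1))" for n
    using \<rho>_def by (simp add: fun_eq_iff)
  have rho_pos: "\<rho> n t > 0" if "t > 0" for n t
  proof -
    have "f (V t) > 0" using f_pos Vpos[OF that] by blast
    then show ?thesis unfolding rho_eq using a_pos[of n] f'_pos[OF Vpos[OF that]]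
      by (intro mult_pos_pos divide_pos_pos) auto
  qed
  have P1: "\<rho> n t < \<rho> n s" if "0 < s" "s < t" for n s t
  proof -
    have "V s < V t" using V_strict that by simp
    moreover have "V s > 0" using Vpos that by simp
    moreover have "a n + 1 > 1" using a_pos[of n] by simp
    ultimately have "deriv f (V t) / f (V t) powr (a n + 1) < deriv f (V s) / f (V s) powr (a n + 1)"
      using f_dec by blast
    note h = this
    show ?thesis unfolding rho_eq by (rule mult_strict_left_mono[OF h a_pos])
  qed
  have P2: "(\<lambda>n. \<rho> n r) \<longlonglongrightarrow> 0" if "r > 0" for r
  proof -
    have p: "f (V r) > 0" using f_pos Vpos[OF that] by simp
    have "(\<lambda>n. a n * deriv f (V r) / f (V r) powr (a n + 1)) \<longlonglongrightarrow>
          0 * deriv f (V r) / f (V r) powr (0 + 1)"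
      using p by (intro tendsto_intros a_lim) auto
    then show ?thesis using \<rho>_def by simp
  qed
  have P3: "((\<lambda>r. \<rho> n r * V r) \<longlongrightarrow> 0) at_top" for n
  proof -
    have "((\<lambda>s. s * deriv f s / (f s) powr (a n + 1)) \<longlongrightarrow> 0) at_top"
      using f_lim2 a_pos[of n] by simp
    then have "((\<lambda>r. V r * deriv f (V r) / (f (V r)) powr (a n + 1)) \<longlongrightarrow> 0) at_top"
      using filterlim_compose[OF _ V_lim] by blast
    then have "((\<lambda>r. a n * (V r * deriv f (V r) / (f (V r)) powr (a n + 1))) \<longlongrightarrow> a n * 0) at_top"
      by (intro tendsto_intros)
    moreover have "(\<lambda>r. \<rho> n r * V r) = (\<lambda>r. a n * (V r * deriv f (V r) / (f (V r)) powr (a n + 1)))"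
      using \<rho>_def by (simp add: fun_eq_iff)
    ultimately show ?thesis by simp
  qed
  have ratio: "\<rho> n r / \<rho> m r = (a n / a m) * f (V r) powr (a m - a n)" if "r > 0" for n m r
  proof -
    define p where "p = f (V r)"
    define d where "d = deriv f (V r)"
    have p: "p > 0" using f_pos Vpos[OF that] by (simp add: p_def)
    have d: "d > 0" using f'_pos Vpos[OF that] by (simp add: d_def)
    have e: "p powr (a m - a n) = p powr (a m + 1) / p powr (a n + 1)"
      by (simp add: powr_diff[symmetric])
    have am: "a m > 0" "a n > 0" using a_pos by auto
    show ?thesis unfolding rho_eq p_def[symmetric] d_def[symmetric] e
      using p d am by (simp add: field_simps)
  qed
  have P4: "mono_on {0<..} (\<lambda>r. \<rho> n r / \<rho> m r)" if "m < n" for n m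
  proof (rule mono_onI)
    fix x y :: real assume xy: "x \<in> {0<..}" "y \<in> {0<..}" "x \<le> y"
    have "V x \<le> V y" using V_strict xy by (cases "x = y") (auto intro: less_imp_le)
    moreover have "V x > 0" "V y > 0" using Vpos xy by auto
    ultimately have "f (V x) \<le> f (V y)" using mono_onD[OF f_mono, of "V x" "V y"] by auto
    moreover have "f (V x) > 0" using f_pos \<open>V x > 0\<close> by simp
    moreover have "a m - a n \<ge> 0" using a_lt[OF that] by simp
    ultimately have "f (V x) powr (a m - a n) \<le> f (V y) powr (a m - a n)"
      by (intro powr_mono2) auto
    moreover have "a n / a m \<ge> 0" using a_pos[of n] a_pos[of m] by simp
    ultimately show "\<rho> n x / \<rho> m x \<le> \<rho> n y / \<rho> m y"
      unfolding ratio[of x n m, OF xy(1)[simplified]] ratio[of y n m, OF xy(2)[simplified]]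
      by (rule mult_left_mono)
  qed
  have Vc: "continuous_on {0<..} V"
    using V_cont by (intro continuous_at_imp_continuous_on) auto
  have Vmap: "V ` {0<..} \<subseteq> {0<..}" using Vpos by auto
  have fc: "continuous_on {0<..} f"
    using f_diff DERIV_isCont by (intro continuous_at_imp_continuous_on) auto
  have f'c: "continuous_on {0<..} (deriv f)"
    using f'_diff DERIV_isCont by (intro continuous_at_imp_continuous_on) auto
  have fVc: "continuous_on {0<..} (\<lambda>x. f (V x))"
    using continuous_on_compose2[OF fc Vc Vmap] .
  have f'Vc: "continuous_on {0<..} (\<lambda>x. deriv f (V x))"
    using continuous_on_compose2[OF f'c Vc Vmap] .
  have f''Vc: "continuous_on {0<..} (\<lambda>x. deriv (deriv f) (V x))"
    using continuous_on_compose2[OF f''_cont Vc Vmap] .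
  have Sc: "continuous_on {0<..} S" using S_cont by (rule continuous_on_subset) auto
  have fVnz: "\<forall>x\<in>{0<..}. f (V x) \<noteq> 0" using fVpos by (metis greaterThan_iff less_irrefl)
  have gc: "continuous_on {0<..} (\<lambda>x. S x * \<rho> n x)" for n
    unfolding rho_fun using fVnz
    by (intro continuous_intros Sc fVc f'Vc) (auto simp: fVnz)
  have FTC: "set_integrable lborel {c<..} (\<lambda>x. S x * \<rho> n x) \<and>
     (LBINT x:{c<..}. S x * \<rho> n x) = f (V c) powr (- a n)" if "c > 0" for c n
  proof -
    define F where "F = (\<lambda>x. - (f (V x) powr (- a n)))"
    have Fd: "(F has_real_derivative S x * \<rho> n x) (at x)" if "x > 0" for x
    proof -
      have p: "f (V x) > 0" using f_pos Vpos[OF that] by simp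
      have ch: "((\<lambda>x. f (V x)) has_real_derivative deriv f (V x) * S x) (at x)"
        by (rule DERIV_chain2[OF f_diff[OF Vpos[OF that]] V_at[OF that]])
      have e: "f (V x) powr (- a n - 1) = inverse (f (V x) powr (a n + 1))"
        by (simp add: powr_minus[symmetric])
      show ?thesis unfolding F_def
        by (rule DERIV_cong[OF DERIV_minus[OF DERIV_fun_powr[OF ch p]]])
           (simp add: rho_eq e field_simps)
    qed
    have gcont: "isCont (\<lambda>x. S x * \<rho> n x) x" if "x > 0" for x
      using gc[of n] that by (simp add: continuous_on_eq_continuous_at)
    have A: "(F \<longlongrightarrow> F c) (at_right c)"
    proof -
      have "isCont F c" using Fd[OF that] DERIV_isCont by blast
      then have "(F \<longlongrightarrow> F c) (at c)" by (simp add: isCont_def)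
      then show ?thesis by (rule tendsto_mono[rotated]) (simp add: at_le)
    qed
    have B: "(F \<longlongrightarrow> 0) at_top"
    proof -
      have "filterlim (\<lambda>x. f (V x)) at_top at_top" by (rule filterlim_compose[OF f_lim V_lim])
      then have "((\<lambda>x. f (V x) powr (- a n)) \<longlongrightarrow> 0) at_top"
        using a_pos[of n] by (intro tendsto_neg_powr) auto
      then have "((\<lambda>x. - (f (V x) powr (- a n))) \<longlongrightarrow> - 0) at_top" by (rule tendsto_minus)
      then show ?thesis by (simp add: F_def)
    qed
    have nn: "AE x in lborel. ereal c < ereal x \<longrightarrow> ereal x < \<infinity> \<longrightarrow> 0 \<le> S x * \<rho> n x"
    proof (intro AE_I2 impI)
      fix x assume "ereal c < ereal x"
      then have "x > 0" using that by simp
      then show "0 \<le> S x * \<rho> n x" using S_nonneg[of x] rho_pos[of x n] by simp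
    qed
    have Fd': "DERIV F x :> S x * \<rho> n x" if "ereal c < ereal x" "ereal x < \<infinity>" for x
      using that \<open>c > 0\<close> by (intro Fd) simp
    have gcont': "isCont (\<lambda>x. S x * \<rho> n x) x" if "ereal c < ereal x" "ereal x < \<infinity>" for x
      using that \<open>c > 0\<close> by (intro gcont) simp
    have A': "((F \<circ> real_of_ereal) \<longlongrightarrow> F c) (at_right (ereal c))"
      using A by (simp add: ereal_tendsto_simps)
    have B': "((F \<circ> real_of_ereal) \<longlongrightarrow> 0) (at_left \<infinity>)"
      using B by (simp add: ereal_tendsto_simps)
    have lt: "ereal c < \<infinity>" by simp
    note R = interval_integral_FTC_nonneg[OF lt Fd' gcont' nn A' B']
    have ei: "einterval (ereal c) \<infinity> = {c<..}" by (auto simp: einterval_def)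
    have R1: "set_integrable lborel {c<..} (\<lambda>x. S x * \<rho> n x)" using R(1) unfolding ei .
    have R2: "(LBINT x:{c<..}. S x * \<rho> n x) = 0 - F c"
      using R(2) unfolding interval_integral_to_infinity_eq .
    show ?thesis using R1 R2 by (simp add: F_def)
  qed
  have P5: "set_integrable lborel {R..} (\<lambda>r. S r * \<rho> n r)" if "R > 0" for n R
  proof -
    have "R/2 > 0" using that by simp
    from conjunct1[OF FTC[OF this, of n]] show ?thesis
      by (rule set_integrable_subset) (use that in auto)
  qed
  have P6: "(LBINT r:{R..}. S r * \<rho> n r) = f (V R) powr (- a n)" if "R > 0" for n R
  proof -
    have i1: "set_integrable lborel {R<..} (\<lambda>r. S r * \<rho> n r)" using conjunct1[OF FTC[OF that]] .
    have "(LBINT r:{R..}. S r * \<rho> n r) = (LBINT r:{R<..}. S r * \<rho> n r)"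
    proof (rule set_integral_cong_set)
      show "set_borel_measurable lborel {R<..} (\<lambda>r. S r * \<rho> n r)"
        using i1 unfolding set_integrable_def set_borel_measurable_def by (rule borel_measurable_integrable)
      show "set_borel_measurable lborel {R..} (\<lambda>r. S r * \<rho> n r)"
        using P5[OF that] unfolding set_integrable_def set_borel_measurable_def by (rule borel_measurable_integrable)
      have "AE x in lborel. x \<notin> {R}" by (rule AE_not_in) (simp add: finite_imp_null_set_lborel)
      then show "AE x in lborel. (x \<in> {R<..}) = (x \<in> {R..})" by eventually_elim auto
    qed
    then show ?thesis using FTC[OF that] by simp
  qed
  have P7: "(\<lambda>n. LBINT r:{R..}. S r * \<rho> n r) \<longlonglongrightarrow> 1" if "R > 0" for R
  proof -
    have p: "f (V R) > 0" using f_pos Vpos[OF that] by simp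
    have "(\<lambda>n. f (V R) powr (- a n)) \<longlonglongrightarrow> f (V R) powr (- 0)"
      using p by (intro tendsto_intros a_lim) auto
    then show ?thesis using P6[OF that] p by simp
  qed
  have P0: "C1_on {0<..} (\<rho> n)" for n
  proof -
    define D where "D = (\<lambda>x. a n * (deriv (deriv f) (V x) * S x * f (V x) powr (- (a n + 1))
        + deriv f (V x) * (- (a n + 1) * f (V x) powr (- (a n + 1) - 1) * (deriv f (V x) * S x))))"
    have rf: "\<rho> n = (\<lambda>x. a n * (deriv f (V x) * f (V x) powr (- (a n + 1))))"
      unfolding powr_minus using \<rho>_def by (simp add: fun_eq_iff divide_inverse)
    have Dd: "(\<rho> n has_real_derivative D x) (at x)" if "x > 0" for x
    proof -
      have p: "f (V x) > 0" using f_pos Vpos[OF that] by simp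
      have ch: "((\<lambda>x. f (V x)) has_real_derivative deriv f (V x) * S x) (at x)"
        by (rule DERIV_chain2[OF f_diff[OF Vpos[OF that]] V_at[OF that]])
      have ch2: "((\<lambda>x. deriv f (V x)) has_real_derivative deriv (deriv f) (V x) * S x) (at x)"
        by (rule DERIV_chain2[OF f'_diff[OF Vpos[OF that]] V_at[OF that]])
      show ?thesis unfolding rf
        by (rule DERIV_cong[OF DERIV_cmult[OF DERIV_mult[OF ch2 DERIV_fun_powr[OF ch p]]]])
           (simp add: D_def algebra_simps)
    qed
    have "continuous_on {0<..} D"
      unfolding D_def using fVnz
      by (intro continuous_intros Sc fVc f'Vc f''Vc) (auto simp: fVnz)
    moreover have "\<forall>x\<in>{0<..}. D x = deriv (\<rho> n) x"
      using Dd by (auto intro: DERIV_imp_deriv[symmetric])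
    ultimately have "continuous_on {0<..} (deriv (\<rho> n))"
      using continuous_on_cong by blast
    moreover have "\<forall>x\<in>{0<..}. \<rho> n differentiable (at x)"
      using Dd by (auto simp: real_differentiable_def)
    ultimately show ?thesis unfolding C1_on_def by simp
  qed
  have L: "\<exists>L. (\<forall>R>0. (\<lambda>n. LBINT r:{R..}. S r * \<rho> n r) \<longlonglongrightarrow> L R) \<and> (L \<longlongrightarrow> 1) at_top"
    by (rule exI[of _ "\<lambda>R. 1"]) (auto intro: P7)
  show ?thesis
    using P0 P1 P2 P3 P4 P5 L unfolding approx_identity_radial_def
    by (intro conjI allI impI) (blast | (rule exI[of _ \<rho>], blast))+
qed
end
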